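(* Let $k\ge1$, $\tau\in(0,1)$, $f(s)=s-\frac{s}{\tau}+\frac{\mathbb{E}[\min\{\mathrm{Pois}(sk),k\}]}{\tau k}$, $\alpha_k^\tau=\sup_{0\le s\le1}f(s)$, $\beta_k^\tau=\sup_{s\ge0}f(s)$, and let $s^*_\alpha,s^*_\beta$ be the respective maximizers. Then $s^*_\alpha=s^*_\beta$ (and hence $\alpha_k^\tau=\beta_k^\tau$) if and only if $$\tau\le1-e^{-k}\sum_{j=0}^{k-1}\frac{k^j}{j!}.$$ In particular, this condition holds for every $k\ge1$ whenever $\tau\le1/2$.
   Context: $\mathrm{Pois}(\lambda)$ denotes a Poisson random variable with mean $\lambda$. The function $f$ is concave on $[0,\infty)$, so the maximizers are well defined. *)

theory Defs
  imports "HOL-Analysis.Analysis"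
begin

text \<open>E[min(Pois(lam), k)] written out via the Poisson pmf
  P(Pois(lam) = j) = lam^j / j! * exp(-lam)  (for lam = 0 this is the point mass at 0).\<close>
definition pois_min_mean :: "real \<Rightarrow> nat \<Rightarrow> real" where
  "pois_min_mean lam k = (\<Sum>j. real (min j k) * (lam ^ j / fact j * exp (- lam)))"

definition fobj :: "nat \<Rightarrow> real \<Rightarrow> real \<Rightarrow> real" where
  "fobj k \<tau> s = s - s / \<tau> + pois_min_mean (s * real k) k / (\<tau> * real k)"

definition alpha_val :: "nat \<Rightarrow> real \<Rightarrow> real" where
  "alpha_val k \<tau> = (SUP s\<in>{0..1}. fobj k \<tau> s)"

definition beta_val :: "nat \<Rightarrow> real \<Rightarrow> real" where
  "beta_val k \<tau> = (SUP s\<in>{0..}. fobj k \<tau> s)"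

definition s_alpha :: "nat \<Rightarrow> real \<Rightarrow> real" where
  "s_alpha k \<tau> = (THE s. s \<in> {0..1} \<and> (\<forall>t\<in>{0..1}. fobj k \<tau> t \<le> fobj k \<tau> s))"

definition s_beta :: "nat \<Rightarrow> real \<Rightarrow> real" where
  "s_beta k \<tau> = (THE s. s \<in> {0..} \<and> (\<forall>t\<in>{0..}. fobj k \<tau> t \<le> fobj k \<tau> s))"

end

theory Submission
  imports Defs
begin

definition SS :: "nat \<Rightarrow> real \<Rightarrow> real" where "SS k x = (\<Sum>j<k. x^j / fact j)"
definition RR :: "nat \<Rightarrow> real \<Rightarrow> real" where "RR k x = (\<Sum>j<k. (real k - real j) * x^j / fact j)"
definition PP :: "nat \<Rightarrow> real \<Rightarrow> real" where "PP k x = exp (-x) * SS k x"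

lemma pmm: "pois_min_mean lam k = real k - exp (-lam) * RR k lam"
proof -
  have e: "(\<lambda>j. lam^j / fact j) sums exp lam"
    using exp_converges[of lam] by (simp add: divide_inverse_commute scaleR_conv_of_real)
  have e1: "(\<lambda>j. real k * (lam^j / fact j * exp (-lam))) sums (real k * (exp lam * exp (-lam)))"
    by (intro sums_mult sums_mult2 e)
  have e2: "(\<lambda>j. if j \<in> {..<k} then (real k - real j) * (lam^j / fact j * exp (-lam)) else 0)
      sums (\<Sum>j\<in>{..<k}. (real k - real j) * (lam^j / fact j * exp (-lam)))"
    by (rule sums_If_finite_set) simp
  have "(\<lambda>j. real (min j k) * (lam ^ j / fact j * exp (- lam))) sums
     (real k * (exp lam * exp (-lam)) - (\<Sum>j\<in>{..<k}. (real k - real j) * (lam^j / fact j * exp (-lam))))"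
  proof -
    have "(\<lambda>j. real (min j k) * (lam ^ j / fact j * exp (- lam))) = 
      (\<lambda>j. real k * (lam^j / fact j * exp (-lam)) - (if j \<in> {..<k} then (real k - real j) * (lam^j / fact j * exp (-lam)) else 0))"
      by (rule ext) (auto simp: algebra_simps min_def add_divide_distrib[symmetric] diff_divide_distrib[symmetric])
    then show ?thesis using sums_diff[OF e1 e2] by simp
  qed
  then have "pois_min_mean lam k = real k * (exp lam * exp (-lam)) - (\<Sum>j\<in>{..<k}. (real k - real j) * (lam^j / fact j * exp (-lam)))"
    unfolding pois_min_mean_def by (rule sums_unique[symmetric])
  also have "\<dots> = real k - exp (-lam) * RR k lam"
    by (simp add: RR_def sum_distrib_left exp_minus field_simps)
  finally show ?thesis .
qed

lemma fsne[simp]: "(fact i::real) + fact i * real i \<noteq> 0"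
proof -
  have "(0::real) < fact i + fact i * real i" by (intro add_pos_nonneg) auto
  then show ?thesis by simp
qed

lemma RR_deriv_id: "(\<Sum>j<k. (real k - real j) * (real j * x^(j-1)) / fact j) = RR k x - SS k x"
proof (cases k)
  case 0 then show ?thesis by (simp add: RR_def SS_def)
next
  case (Suc m)
  have "(\<Sum>j<Suc m. (real (Suc m) - real j) * (real j * x^(j-1)) / fact j)
      = (\<Sum>i<m. (real m - real i) * x^i / fact i)"
    by (subst sum.lessThan_Suc_shift) (auto intro!: sum.cong simp: field_simps)
  also have "\<dots> = (\<Sum>j<Suc m. (real m - real j) * x^j / fact j)" by simp
  also have "\<dots> = RR (Suc m) x - SS (Suc m) x"
    unfolding RR_def SS_def sum_subtractf[symmetric] by (rule sum.cong) (auto simp: field_simps)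
  finally show ?thesis using Suc by simp
qed

lemma RR_deriv: "(RR k has_real_derivative (RR k x - SS k x)) (at x)"
proof -
  have "((\<lambda>x. \<Sum>j<k. (real k - real j) * x^j / fact j) has_real_derivative
     (\<Sum>j<k. (real k - real j) * (real j * x^(j-1)) / fact j)) (at x)"
    by (auto intro!: derivative_eq_intros sum.cong simp: divide_simps algebra_simps)
  then show ?thesis unfolding RR_deriv_id by (simp add: RR_def[abs_def] mult_ac)
qed

lemma SS_deriv: "k \<ge> 1 \<Longrightarrow> (SS k has_real_derivative SS (k-1) x) (at x)"
proof -
  assume k: "k \<ge> 1"
  have "((\<lambda>x. \<Sum>j<k. x^j / fact j) has_real_derivative
     (\<Sum>j<k. (real j * x^(j-1)) / fact j)) (at x)"
    by (auto intro!: derivative_eq_intros)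
  moreover obtain m where m: "k = Suc m" using k by (cases k) auto
  moreover have "(\<Sum>j<Suc m. (real j * x^(j-1)) / fact j) = SS m x"
    by (subst sum.lessThan_Suc_shift) (auto intro!: sum.cong simp: SS_def field_simps)
  ultimately show ?thesis by (simp add: SS_def[abs_def])
qed

lemma PP_deriv: "k \<ge> 1 \<Longrightarrow> (PP k has_real_derivative (- (exp (-x) * x^(k-1) / fact (k-1)))) (at x)"
proof -
  assume k: "k \<ge> 1"
  obtain m where m: "k = Suc m" using k by (cases k) auto
  have "((\<lambda>x. exp (-x) * SS k x) has_real_derivative (exp (-x) * (-1) * SS k x + exp (-x) * SS (k-1) x)) (at x)"
    by (auto intro!: derivative_eq_intros SS_deriv k)
  moreover have "exp (-x) * (-1) * SS k x + exp (-x) * SS (k-1) x = - (exp (-x) * x^(k-1) / fact (k-1))"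
    using m by (simp add: SS_def algebra_simps)
  ultimately show ?thesis by (simp add: PP_def[abs_def])
qed


lemma PP_isCont: "k \<ge> 1 \<Longrightarrow> isCont (PP k) x"
  using PP_deriv DERIV_isCont by blast

lemma PP_0: "k \<ge> 1 \<Longrightarrow> PP k 0 = 1"
  by (cases k) (simp_all add: PP_def SS_def sum.lessThan_Suc_shift del: sum.lessThan_Suc)

lemma PP_strict_dec:
  assumes k: "k \<ge> 1" and xy: "0 \<le> x" "x < y"
  shows "PP k y < PP k x"
proof (rule DERIV_neg_imp_decreasing_open[OF xy(2)])
  fix t assume t: "x < t" "t < y"
  then have "t > 0" using xy by simp
  then show "\<exists>D. DERIV (PP k) t :> D \<and> D < 0"
    using PP_deriv[OF k, of t] by (intro exI[of _ "- (exp (-t) * t^(k-1) / fact (k-1))"]) simp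
next
  show "continuous_on {x..y} (PP k)"
    using PP_isCont[OF k] by (simp add: continuous_at_imp_continuous_on)
qed

lemma PP_mono:
  assumes k: "k \<ge> 1" and xy: "0 \<le> x" "x \<le> y"
  shows "PP k y \<le> PP k x"
  using PP_strict_dec[OF k xy(1), of y] xy(2) by (cases "x = y") (auto simp: less_le)

lemma PP_lim: "(PP k \<longlongrightarrow> 0) at_top"
proof -
  have "((\<lambda>x::real. \<Sum>j<k. (x^j / exp x) / fact j) \<longlongrightarrow> (\<Sum>j<k. 0 / fact j)) at_top"
    proof (intro tendsto_sum)
    fix j :: nat
    show "((\<lambda>x::real. x ^ j / exp x / fact j) \<longlongrightarrow> 0 / fact j) at_top"
      using tendsto_divide_zero[OF tendsto_power_div_exp_0[of j], of "fact j"] by simp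
  qed
  moreover have "(\<lambda>x. \<Sum>j<k. (x^j / exp x) / fact j) = PP k"
    by (rule ext) (simp add: PP_def SS_def sum_distrib_left exp_minus field_simps)
  ultimately show ?thesis by simp
qed

lemma RR_deriv' [derivative_intros]:
  "(g has_real_derivative g') (at x within S) \<Longrightarrow> ((\<lambda>x. RR k (g x)) has_real_derivative (RR k (g x) - SS k (g x)) * g') (at x within S)"
  by (rule DERIV_chain2[OF RR_deriv])

lemma fobj_eq: "fobj k \<tau> = (\<lambda>s. s - s / \<tau> + (real k - exp (-(s * real k)) * RR k (s * real k)) / (\<tau> * real k))"
  by (rule ext) (simp add: fobj_def pmm)

lemma fobj_deriv:
  assumes "k \<ge> 1" "\<tau> > 0"
  shows "(fobj k \<tau> has_real_derivative (PP k (s * real k) - (1 - \<tau>)) / \<tau>) (at s)"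
proof -
  have "((\<lambda>s. s - s / \<tau> + (real k - exp (-(s * real k)) * RR k (s * real k)) / (\<tau> * real k)) has_real_derivative
     1 - 1 / \<tau> + (- (exp (-(s * real k)) * (- real k) * RR k (s * real k) + exp (-(s * real k)) * ((RR k (s * real k) - SS k (s * real k)) * real k)))  / (\<tau> * real k)) (at s)"
    using assms by (auto intro!: derivative_eq_intros)
  moreover have "1 - 1 / \<tau> + (- (exp (-(s * real k)) * (- real k) * RR k (s * real k) + exp (-(s * real k)) * ((RR k (s * real k) - SS k (s * real k)) * real k)))  / (\<tau> * real k)
     = (PP k (s * real k) - (1 - \<tau>)) / \<tau>"
  proof -
    have "\<tau> \<noteq> 0" "real k \<noteq> 0" using assms by auto
    then show ?thesis by (simp add: PP_def field_simps)
  qed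
  ultimately show ?thesis by (simp add: fobj_eq)
qed


lemma fobj_isCont: "k \<ge> 1 \<Longrightarrow> \<tau> > 0 \<Longrightarrow> isCont (fobj k \<tau>) x"
  using fobj_deriv DERIV_isCont by blast

lemma sstar_exists:
  assumes k: "k \<ge> 1" and t: "0 < \<tau>" "\<tau> < 1"
  shows "\<exists>s>0. PP k (s * real k) = 1 - \<tau>"
proof -
  have "eventually (\<lambda>x. PP k x < 1 - \<tau>) at_top"
    using order_tendstoD(2)[OF PP_lim, of "1 - \<tau>"] t by simp
  then obtain N where N: "\<And>x. x \<ge> N \<Longrightarrow> PP k x < 1 - \<tau>"
    by (auto simp: eventually_at_top_linorder)
  define b where "b = max N 1 / real k"
  have kpos: "real k > 0" using k by simp
  have bk: "b * real k = max N 1" using kpos by (simp add: b_def)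
  have b0: "0 \<le> b" using kpos by (simp add: b_def)
  have "\<exists>s. 0 \<le> s \<and> s \<le> b \<and> PP k (s * real k) = 1 - \<tau>"
  proof (rule IVT2)
    show "PP k (b * real k) \<le> 1 - \<tau>" using N[of "max N 1"] bk by simp
    show "1 - \<tau> \<le> PP k (0 * real k)" using PP_0[OF k] t by simp
    show "0 \<le> b" by (rule b0)
    show "\<forall>x. 0 \<le> x \<and> x \<le> b \<longrightarrow> isCont (\<lambda>s. PP k (s * real k)) x"
    proof (intro allI impI)
      fix x :: real
      have "isCont (\<lambda>s. s * real k) x" by (intro continuous_intros)
      then show "isCont (\<lambda>s. PP k (s * real k)) x"
        using isCont_o2 PP_isCont[OF k] by blast
    qed
  qed
  then obtain s where s: "0 \<le> s" "PP k (s * real k) = 1 - \<tau>" by auto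
  have "s \<noteq> 0" using s PP_0[OF k] t by auto
  then have "s > 0" using s by simp
  then show ?thesis using s(2) by blast
qed

lemma fobj_inc:
  assumes k: "k \<ge> 1" and t: "0 < \<tau>" and ss: "s > 0" "PP k (s * real k) = 1 - \<tau>"
    and ab: "0 \<le> a" "a < b" "b \<le> s"
  shows "fobj k \<tau> a < fobj k \<tau> b"
proof (rule DERIV_pos_imp_increasing_open[OF ab(2)])
  fix x assume x: "a < x" "x < b"
  have kpos: "real k > 0" using k by simp
  have "PP k (s * real k) < PP k (x * real k)"
    using x ab kpos by (intro PP_strict_dec[OF k]) auto
  then show "\<exists>y. DERIV (fobj k \<tau>) x :> y \<and> 0 < y"
    using fobj_deriv[OF k t, of x] ss t by (intro exI[of _ "(PP k (x * real k) - (1 - \<tau>)) / \<tau>"]) auto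
next
  show "continuous_on {a..b} (fobj k \<tau>)"
    using fobj_isCont[OF k t] by (simp add: continuous_at_imp_continuous_on)
qed

lemma fobj_dec:
  assumes k: "k \<ge> 1" and t: "0 < \<tau>" and ss: "s > 0" "PP k (s * real k) = 1 - \<tau>"
    and ab: "s \<le> a" "a < b"
  shows "fobj k \<tau> b < fobj k \<tau> a"
proof (rule DERIV_neg_imp_decreasing_open[OF ab(2)])
  fix x assume x: "a < x" "x < b"
  have kpos: "real k > 0" using k by simp
  have "PP k (x * real k) < PP k (s * real k)"
    using x ab kpos ss by (intro PP_strict_dec[OF k]) auto
  then show "\<exists>y. DERIV (fobj k \<tau>) x :> y \<and> y < 0"
    using fobj_deriv[OF k t, of x] ss t by (intro exI[of _ "(PP k (x * real k) - (1 - \<tau>)) / \<tau>"]) (auto simp: divide_neg_pos)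
next
  show "continuous_on {a..b} (fobj k \<tau>)"
    using fobj_isCont[OF k t] by (simp add: continuous_at_imp_continuous_on)
qed

lemma fobj_max:
  assumes k: "k \<ge> 1" and t: "0 < \<tau>" and ss: "s > 0" "PP k (s * real k) = 1 - \<tau>"
    and x: "0 \<le> x" "x \<noteq> s"
  shows "fobj k \<tau> x < fobj k \<tau> s"
  using fobj_inc[OF k t ss, of x s] fobj_dec[OF k t ss, of s x] x by (cases "x < s") auto


lemma two_ln_le:
  assumes x: "x \<ge> (1::real)"
  shows "2 * ln x \<le> x - 1 / x"
proof -
  have "(\<lambda>t. t - 1/t - 2 * ln t) 1 \<le> (\<lambda>t. t - 1/t - 2 * ln t) x"
  proof (rule DERIV_nonneg_imp_nondecreasing[OF x])
    fix t :: real assume t: "1 \<le> t" "t \<le> x"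
    have "((\<lambda>t. t - 1/t - 2 * ln t) has_real_derivative 1 + 1/t^2 - 2/t) (at t)"
      using t by (auto intro!: derivative_eq_intros simp: power2_eq_square field_simps)
    moreover have "1 + 1/t^2 - 2/t = (t - 1)^2 / t^2"
      using t by (simp add: field_simps power2_eq_square)
    moreover have "(t - 1)^2 / t^2 \<ge> 0" by simp
    ultimately show "\<exists>y. ((\<lambda>t. t - 1/t - 2 * ln t) has_real_derivative y) (at t) \<and> 0 \<le> y"
      by auto
  qed
  then show ?thesis by simp
qed

lemma key_ineq:
  assumes k: "k = Suc m" and K: "K = real k" and a: "a \<ge> K"
  shows "exp (-a) * a ^ k \<le> exp (- (K^2/a)) * (K^2/a) ^ k"
proof -
  have Kp: "K > 0" using K k by simp
  have ap: "a > 0" using a Kp by simp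
  define x where "x = a / K"
  have x1: "x \<ge> 1" using a Kp by (simp add: x_def)
  have xp: "x > 0" using x1 by simp
  have "x^2 = exp (2 * ln x)" using xp by (simp add: exp_ln ln_powr[symmetric] power2_eq_square exp_add[symmetric] mult_2)
  also have "\<dots> \<le> exp (x - 1/x)" using two_ln_le[OF x1] by simp
  finally have "(x^2)^k \<le> exp (x - 1/x) ^ k" by (intro power_mono) auto
  also have "\<dots> = exp (K * (x - 1/x))" using K by (simp add: exp_of_nat_mult)
  also have "K * (x - 1/x) = a - K^2/a" using Kp ap by (simp add: x_def field_simps power2_eq_square)
  finally have e: "(x^2)^k \<le> exp (a - K^2/a)" .
  have "(x^2)^k = a^k / (K^2/a)^k" using Kp ap
    by (simp add: x_def power_divide[symmetric] field_simps power2_eq_square)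
  with e have "a^k \<le> exp (a - K^2/a) * (K^2/a)^k"
    using Kp ap by (simp add: divide_le_eq)
  then have "exp (-a) * a^k \<le> exp (-a) * (exp (a - K^2/a) * (K^2/a)^k)"
    by (intro mult_left_mono) auto
  also have "\<dots> = exp (- (K^2/a)) * (K^2/a) ^ k"
    by (simp add: exp_add[symmetric] mult.assoc[symmetric])
  finally show ?thesis .
qed

lemma PP_half: "k \<ge> 1 \<Longrightarrow> PP k (real k) \<le> 1/2"
proof -
  assume k: "k \<ge> 1"
  obtain m where m: "k = Suc m" using k by (cases k) auto
  define K where "K = real k"
  have Kp: "K > 0" using k by (simp add: K_def)
  define W where "W a = PP k (K^2/a) + PP k a" for a
  define D where "D a = (- (exp (- (K^2/a)) * (K^2/a)^(k-1) / fact (k-1))) * (- (K^2/a^2))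
      + (- (exp (-a) * a^(k-1) / fact (k-1)))" for a
  have dW: "(W has_real_derivative D a) (at a)" if a: "a > 0" for a
  proof -
    have d1: "((\<lambda>a. K^2/a) has_real_derivative -(K^2/a^2)) (at a)"
      using a by (auto intro!: derivative_eq_intros simp: power2_eq_square field_simps)
    have "((\<lambda>a. PP k (K^2/a)) has_real_derivative (- (exp (- (K^2/a)) * (K^2/a)^(k-1) / fact (k-1))) * (- (K^2/a^2))) (at a)"
      by (rule DERIV_chain2[OF PP_deriv[OF k] d1])
    from DERIV_add[OF this PP_deriv[OF k, of a]] show ?thesis
      by (simp add: W_def[abs_def] D_def)
  qed
  have Dnn: "D a \<ge> 0" if a: "a \<ge> K" for a
  proof -
    have ap: "a > 0" using a Kp by simp
    have "D a = (exp (- (K^2/a)) * (K^2/a)^(Suc m) - exp (-a) * a^(Suc m)) / (a * fact m)"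
      using ap m by (simp add: D_def field_simps power2_eq_square)
    moreover have "exp (-a) * a^(Suc m) \<le> exp (- (K^2/a)) * (K^2/a)^(Suc m)"
      using key_ineq[OF m K_def a] m by simp
    ultimately show ?thesis using ap by simp
  qed
  have mono: "W K \<le> W a" if a: "a \<ge> K" for a
  proof (rule DERIV_nonneg_imp_nondecreasing[OF a])
    fix x assume x: "K \<le> x" "x \<le> a"
    then show "\<exists>y. (W has_real_derivative y) (at x) \<and> 0 \<le> y"
      using dW[of x] Dnn[of x] Kp by auto
  qed
  have WK: "W K = 2 * PP k K"
    using Kp by (simp add: W_def power2_eq_square)
  have lim1: "((\<lambda>a. K^2/a) \<longlongrightarrow> 0) at_top"
    by (rule tendsto_divide_0[OF tendsto_const filterlim_at_top_imp_at_infinity[OF filterlim_ident]])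
  have lim2: "((\<lambda>a. PP k (K^2/a)) \<longlongrightarrow> PP k 0) at_top"
    by (rule isCont_tendsto_compose[OF PP_isCont[OF k] lim1])
  have "(W \<longlongrightarrow> PP k 0 + 0) at_top"
    unfolding W_def[abs_def] by (intro tendsto_add lim2 PP_lim)
  then have limW: "(W \<longlongrightarrow> 1) at_top" using PP_0[OF k] by simp
  have "2 * PP k K \<le> 1"
  proof (rule tendsto_lowerbound[OF limW])
    show "eventually (\<lambda>a. 2 * PP k K \<le> W a) at_top"
      using mono WK by (auto simp: eventually_at_top_linorder)
  qed simp
  then show ?thesis by (simp add: K_def)
qed

theorem proposition6p2:
  fixes k :: nat and \<tau> :: real
  assumes "k \<ge> 1" and "0 < \<tau>" and "\<tau> < 1"
  shows "(s_alpha k \<tau> = s_beta k \<tau> \<longleftrightarrow>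
            \<tau> \<le> 1 - exp (- real k) * (\<Sum>j<k. real k ^ j / fact j))
         \<and> (s_alpha k \<tau> = s_beta k \<tau> \<longrightarrow> alpha_val k \<tau> = beta_val k \<tau>)
         \<and> (\<tau> \<le> 1/2 \<longrightarrow> \<tau> \<le> 1 - exp (- real k) * (\<Sum>j<k. real k ^ j / fact j))"
proof -
  note k = assms(1) and t = assms(2) and t1 = assms(3)
  have kpos: "real k > 0" using k by simp
  obtain s where s0: "s > 0" and sP: "PP k (s * real k) = 1 - \<tau>"
    using sstar_exists[OF k t t1] by blast
  note mx = fobj_max[OF k t s0 sP]
  have beta: "s_beta k \<tau> = s"
    unfolding s_beta_def
  proof (rule the_equality)
    show "s \<in> {0..} \<and> (\<forall>t\<in>{0..}. fobj k \<tau> t \<le> fobj k \<tau> s)"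
      using s0 mx by (auto simp: less_imp_le) (metis less_imp_le order_refl)
  next
    fix x assume "x \<in> {0..} \<and> (\<forall>t\<in>{0..}. fobj k \<tau> t \<le> fobj k \<tau> x)"
    then have x0: "0 \<le> x" and xm: "fobj k \<tau> s \<le> fobj k \<tau> x" using s0 by auto
    show "x = s"
    proof (rule ccontr)
      assume "x \<noteq> s"
      then have "fobj k \<tau> x < fobj k \<tau> s" using mx x0 by blast
      then show False using xm by simp
    qed
  qed
  have alpha: "s_alpha k \<tau> = min s 1"
    unfolding s_alpha_def
  proof (rule the_equality)
    show "min s 1 \<in> {0..1} \<and> (\<forall>t\<in>{0..1}. fobj k \<tau> t \<le> fobj k \<tau> (min s 1))"
    proof (cases "s \<le> 1")
      case True
      then show ?thesis using s0 mx by (auto simp: less_imp_le) (metis less_imp_le order_refl)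
    next
      case False
      have "fobj k \<tau> t \<le> fobj k \<tau> 1" if "t \<in> {0..1}" for t
        using fobj_inc[OF k t s0 sP, of t 1] that False by (cases "t = 1") auto
      then show ?thesis using False by auto
    qed
  next
    fix x assume x: "x \<in> {0..1} \<and> (\<forall>t\<in>{0..1}. fobj k \<tau> t \<le> fobj k \<tau> x)"
    show "x = min s 1"
    proof (cases "s \<le> 1")
      case True
      then have x0: "0 \<le> x" and xm: "fobj k \<tau> s \<le> fobj k \<tau> x" using s0 x by auto
      show ?thesis
      proof (rule ccontr)
        assume "x \<noteq> min s 1"
        then have "fobj k \<tau> x < fobj k \<tau> s" using mx x0 True by (simp add: min_def)
        then show False using xm by simp
      qed
    next
      case False
      have "fobj k \<tau> 1 \<le> fobj k \<tau> x" using x by auto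
      have x01: "0 \<le> x" "x \<le> 1" using x by auto
      have "x = 1"
      proof (rule ccontr)
        assume "x \<noteq> 1"
        then have "fobj k \<tau> x < fobj k \<tau> 1" using fobj_inc[OF k t s0 sP, of x 1] x01 False by simp
        then show False using \<open>fobj k \<tau> 1 \<le> fobj k \<tau> x\<close> by simp
      qed
      then show ?thesis using False by simp
    qed
  qed
  have eqiff: "s_alpha k \<tau> = s_beta k \<tau> \<longleftrightarrow> s \<le> 1"
    using alpha beta by (auto simp: min_def)
  have rhs: "1 - exp (- real k) * (\<Sum>j<k. real k ^ j / fact j) = 1 - PP k (real k)"
    by (simp add: PP_def SS_def)
  have c1: "s \<le> 1 \<longleftrightarrow> \<tau> \<le> 1 - PP k (real k)"
  proof
    assume "s \<le> 1"
    then have "PP k (real k) \<le> PP k (s * real k)"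
      using PP_mono[OF k, of "s * real k" "real k"] s0 kpos by (simp add: mult_le_cancel_right1)
    then show "\<tau> \<le> 1 - PP k (real k)" using sP by simp
  next
    assume a: "\<tau> \<le> 1 - PP k (real k)"
    show "s \<le> 1"
    proof (rule ccontr)
      assume "\<not> s \<le> 1"
      then have "PP k (s * real k) < PP k (real k)"
        using PP_strict_dec[OF k, of "real k" "s * real k"] kpos by simp
      then show False using a sP by simp
    qed
  qed
  have c2: "alpha_val k \<tau> = beta_val k \<tau>" if "s \<le> 1"
  proof -
    have "alpha_val k \<tau> = fobj k \<tau> s"
      unfolding alpha_val_def
      by (rule cSup_eq_maximum) (use that s0 mx in \<open>auto simp: less_imp_le\<close>, metis less_imp_le order_refl)
    moreover have "beta_val k \<tau> = fobj k \<tau> s"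
      unfolding beta_val_def
      by (rule cSup_eq_maximum) (use that s0 mx in \<open>auto simp: less_imp_le\<close>, metis less_imp_le order_refl)
    ultimately show ?thesis by simp
  qed
  show ?thesis
    unfolding rhs using eqiff c1 c2 PP_half[OF k] by auto
qed

end
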